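(* Let $\mathcal{F}\subseteq 2^{\mathcal{P}}$. The zero locus in $\mathbb{B}^n$ of the polynomial $\lambda(\bar T)=\prod_{F\in\mathcal{F}}\gamma(\varphi(F),\bar T)\in\mathbb{B}(\bar T)$ is exactly $\varphi(\mathcal{F}^* )=\{\varphi(F'):F'\in\mathcal{F}^*\}$.
   Context: $\mathbb{B}=\mathbb{F}_2$, $\mathcal{P}=\{P_1,\ldots,P_n\}$, $\mathbb{B}(\bar T)=\mathbb{F}_2[T_1,\ldots,T_n]/\langle T_i^2-T_i\rangle$. $\varphi:2^{\mathcal{P}}\to\mathbb{B}^n$ sends a set to its indicator vector. $\gamma(\bar X,\bar Y)=\prod_{i=1}^n(X_iY_i+Y_i+1)+1$. $\mathcal{F}^*=\{F'\subseteq F: F\in\mathcal{F}\}$. *)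

theory Defs
  imports Main "HOL-Library.Z2"
begin

text \<open>The ground set P = {P_1,...,P_n} is modelled by a finite type 'p;
  points of B^n are functions 'p => bit (bit = F_2).\<close>

definition phi :: "'p set \<Rightarrow> ('p \<Rightarrow> bit)" where
  "phi F = (\<lambda>i. if i \<in> F then 1 else 0)"

definition gamma :: "('p::finite \<Rightarrow> bit) \<Rightarrow> ('p \<Rightarrow> bit) \<Rightarrow> bit" where
  "gamma X Y = (\<Prod>i\<in>UNIV. X i * Y i + Y i + 1) + 1"

definition lambda_poly :: "'p::finite set set \<Rightarrow> ('p \<Rightarrow> bit) \<Rightarrow> bit" where
  "lambda_poly \<F> Y = (\<Prod>F\<in>\<F>. gamma (phi F) Y)"

definition down_closure :: "'p set set \<Rightarrow> 'p set set" where
  "down_closure \<F> = {F'. \<exists>F\<in>\<F>. F' \<subseteq> F}"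

end

theory Submission
  imports Defs
begin

lemma bit_cases2: "(b::bit) = 0 \<or> b = 1"
  by (cases b) auto

lemma bit_plus1_0: "(x::bit) + 1 = 0 \<longleftrightarrow> x = 1"
  by (cases x) auto

lemma gamma_zero:
  "gamma X Y = 0 \<longleftrightarrow> (\<forall>i. Y i = 1 \<longrightarrow> X i = 1)"
proof -
  have "gamma X Y = 0 \<longleftrightarrow> (\<Prod>i\<in>UNIV. X i * Y i + Y i + 1) = 1"
    unfolding gamma_def by (rule bit_plus1_0)
  also have "\<dots> \<longleftrightarrow> (\<forall>i. X i * Y i + Y i + 1 \<noteq> 0)"
  proof -
    define p where "p = (\<Prod>i\<in>UNIV. X i * Y i + Y i + 1)"
    have "p = 1 \<longleftrightarrow> p \<noteq> 0" using bit_cases2[of p] by force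
    moreover have "p \<noteq> 0 \<longleftrightarrow> (\<forall>i. X i * Y i + Y i + 1 \<noteq> 0)"
      unfolding p_def prod_zero_iff[OF finite_UNIV] by blast
    ultimately show ?thesis unfolding p_def by blast
  qed
  also have "\<dots> \<longleftrightarrow> (\<forall>i. Y i = 1 \<longrightarrow> X i = 1)"
  proof -
    have "\<And>i. X i * Y i + Y i + 1 \<noteq> 0 \<longleftrightarrow> (Y i = 1 \<longrightarrow> X i = 1)"
      subgoal for i using bit_cases2[of "X i"] bit_cases2[of "Y i"] by auto
      done
    then show ?thesis by blast
  qed
  finally show ?thesis .
qed

lemma phi_supp: "Y = phi {i. Y i = 1}"
proof
  fix i
  show "Y i = phi {i. Y i = 1} i"
    using bit_cases2[of "Y i"] unfolding phi_def by auto
qed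

lemma gamma_phi_zero: "gamma (phi F) Y = 0 \<longleftrightarrow> {i. Y i = 1} \<subseteq> F"
proof -
  have "\<And>i. phi F i = 1 \<longleftrightarrow> i \<in> F" by (simp add: phi_def)
  then show ?thesis unfolding gamma_zero by blast
qed

theorem mainTheorem12:
  fixes \<F> :: "'p::finite set set"
  shows "{Y :: 'p \<Rightarrow> bit. lambda_poly \<F> Y = 0} = phi ` down_closure \<F>"
proof -
  have fin: "finite \<F>" by (rule finite_subset[of _ UNIV]) auto
  have A: "lambda_poly \<F> Y = 0 \<longleftrightarrow> (\<exists>F\<in>\<F>. {i. Y i = 1} \<subseteq> F)" for Y :: "'p \<Rightarrow> bit"
    unfolding lambda_poly_def prod_zero_iff[OF fin] gamma_phi_zero by (rule refl)
  have B: "Y \<in> phi ` down_closure \<F> \<longleftrightarrow> (\<exists>F\<in>\<F>. {i. Y i = 1} \<subseteq> F)" for Y :: "'p \<Rightarrow> bit"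
  proof
    assume "Y \<in> phi ` down_closure \<F>"
    then obtain x F where "Y = phi x" "F \<in> \<F>" "x \<subseteq> F"
      by (auto simp: down_closure_def)
    moreover have "{i. phi x i = 1} = x" by (simp add: phi_def)
    ultimately show "\<exists>F\<in>\<F>. {i. Y i = 1} \<subseteq> F" by blast
  next
    assume "\<exists>F\<in>\<F>. {i. Y i = 1} \<subseteq> F"
    then have "{i. Y i = 1} \<in> down_closure \<F>" by (auto simp: down_closure_def)
    then show "Y \<in> phi ` down_closure \<F>" using phi_supp[of Y] by blast
  qed
  show ?thesis
  proof (rule set_eqI)
    fix Y :: "'p \<Rightarrow> bit"
    show "Y \<in> {Y. lambda_poly \<F> Y = 0} \<longleftrightarrow> Y \<in> phi ` down_closure \<F>"
      unfolding mem_Collect_eq A B by (rule refl)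
  qed
qed

end
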